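(* Let $(S,\mathcal{A},\mu)$ be a complete, $\sigma$-finite measure space and $X$ an octahedral real Banach space. Then $L^1(\mu,X)$ and $L^\infty(\mu,X)$ are also octahedral.
   Context: A real Banach space $X$ is octahedral if for every finite-dimensional subspace $F$ of $X$ and every $\varepsilon>0$ there is $y\in S_X$ (the unit sphere) with $\|x+y\|\ge(1-\varepsilon)(\|x\|+1)$ for all $x\in F$. $L^1(\mu,X)$, $L^\infty(\mu,X)$ are the Lebesgue–Bochner spaces. *)

theory Defs
  imports "HOL-Analysis.Analysis" "HOL-Probability.Essential_Supremum"
begin

text \<open>Octahedrality of a real normed space, given as a type.
  Finite-dimensional subspaces are exactly the spans of finite sets.\<close>
definition octahedral :: "'b::real_normed_vector itself \<Rightarrow> bool" where
  "octahedral _ \<longleftrightarrow>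
     (\<forall>B::'b set. finite B \<longrightarrow> (\<forall>\<epsilon>>0. \<exists>y. norm y = 1 \<and>
        (\<forall>x\<in>span B. norm (x + y) \<ge> (1 - \<epsilon>) * (norm x + 1))))"

text \<open>Octahedrality of a function space V (a real vector space of functions under
  pointwise operations) with seminorm N; this is octahedrality of the normed quotient
  V / ker N (e.g. the space of a.e.-equivalence classes). A finite-dimensional subspace
  of the quotient is spanned by the classes of finitely many elements of V.\<close>
definition octahedral_fs :: "('a \<Rightarrow> 'b::real_normed_vector) set \<Rightarrow> (('a \<Rightarrow> 'b) \<Rightarrow> real) \<Rightarrow> bool" where
  "octahedral_fs V N \<longleftrightarrow>
     (\<forall>B. finite B \<and> B \<subseteq> V \<longrightarrow> (\<forall>\<epsilon>>0. \<exists>y\<in>V. N y = 1 \<and>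
        (\<forall>c :: ('a \<Rightarrow> 'b) \<Rightarrow> real.
           N (\<lambda>s. (\<Sum>f\<in>B. c f *\<^sub>R f s) + y s)
             \<ge> (1 - \<epsilon>) * (N (\<lambda>s. \<Sum>f\<in>B. c f *\<^sub>R f s) + 1))))"

definition strongly_measurable :: "'a measure \<Rightarrow> ('a \<Rightarrow> 'b::real_normed_vector) \<Rightarrow> bool" where
  "strongly_measurable M f \<longleftrightarrow>
     (\<exists>s. (\<forall>n. simple_function M (s n)) \<and> (AE x in M. (\<lambda>n. s n x) \<longlonglongrightarrow> f x))"

text \<open>Defined directly
  rather than via the library's integrable, which requires X second countable (separable).\<close>
definition L1_space :: "'a measure \<Rightarrow> ('a \<Rightarrow> 'b::real_normed_vector) set" where
  "L1_space M = {f. strongly_measurable M f \<and> (\<integral>\<^sup>+ x. ennreal (norm (f x)) \<partial>M) < \<infinity>}"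

definition L1_norm :: "'a measure \<Rightarrow> ('a \<Rightarrow> 'b::real_normed_vector) \<Rightarrow> real" where
  "L1_norm M f = enn2real (\<integral>\<^sup>+ x. ennreal (norm (f x)) \<partial>M)"

definition Linf_space :: "'a measure \<Rightarrow> ('a \<Rightarrow> 'b::real_normed_vector) set" where
  "Linf_space M = {f. strongly_measurable M f \<and> esssup M (\<lambda>x. ereal (norm (f x))) < \<infinity>}"

definition Linf_norm :: "'a measure \<Rightarrow> ('a \<Rightarrow> 'b::real_normed_vector) \<Rightarrow> real" where
  "Linf_norm M f = real_of_ereal (esssup M (\<lambda>x. ereal (norm (f x))))"

end

theory Submission
  imports Defs
begin


definition lc :: "('a \<Rightarrow> 'b::real_vector) set \<Rightarrow> (('a \<Rightarrow> 'b) \<Rightarrow> real) \<Rightarrow> 'a \<Rightarrow> 'b" where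
  "lc B c = (\<lambda>s. \<Sum>g\<in>B. c g *\<^sub>R g s)"

lemma lc_empty[simp]: "lc {} c = (\<lambda>s. 0)" by (simp add: lc_def)

lemma lc_insert: "finite B \<Longrightarrow> h \<notin> B \<Longrightarrow> lc (insert h B) c = (\<lambda>s. c h *\<^sub>R h s + lc B c s)"
  by (simp add: lc_def)

lemma lc_upd: "h \<notin> B \<Longrightarrow> lc B (c(h := v)) = lc B c"
  unfolding lc_def by (intro ext sum.cong) auto

lemma lc_lin: "lc B (\<lambda>g. a * c g + b * d g) = (\<lambda>s. a *\<^sub>R lc B c s + b *\<^sub>R lc B d s)"
  by (simp add: lc_def scaleR_add_left sum.distrib scaleR_sum_right)

locale snorm =
  fixes V :: "('a \<Rightarrow> 'b::real_normed_vector) set" and N :: "('a \<Rightarrow> 'b) \<Rightarrow> real"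
  assumes V_zero: "(\<lambda>s. 0) \<in> V"
  and V_add: "u \<in> V \<Longrightarrow> v \<in> V \<Longrightarrow> (\<lambda>s. u s + v s) \<in> V"
  and V_scale: "u \<in> V \<Longrightarrow> (\<lambda>s. a *\<^sub>R u s) \<in> V"
  and N_nonneg: "u \<in> V \<Longrightarrow> N u \<ge> 0"
  and N_tri: "u \<in> V \<Longrightarrow> v \<in> V \<Longrightarrow> N (\<lambda>s. u s + v s) \<le> N u + N v"
  and N_hom: "u \<in> V \<Longrightarrow> N (\<lambda>s. a *\<^sub>R u s) = \<bar>a\<bar> * N u"
begin

lemma V_diff: "u \<in> V \<Longrightarrow> v \<in> V \<Longrightarrow> (\<lambda>s. u s - v s) \<in> V"
  using V_add[of u "\<lambda>s. (-1) *\<^sub>R v s"] V_scale[of v "-1"] by simp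

lemma V_lc: "finite B \<Longrightarrow> B \<subseteq> V \<Longrightarrow> lc B c \<in> V"
proof (induction B rule: finite_induct)
  case empty then show ?case using V_zero by simp
next
  case (insert h B) then show ?case
    using V_add[OF V_scale[of h "c h"], of "lc B c"] by (simp add: lc_insert)
qed

lemma N_zero: "N (\<lambda>s. 0) = 0"
  using N_hom[OF V_zero, of 0] by simp

lemma N_diff_le: "u \<in> V \<Longrightarrow> v \<in> V \<Longrightarrow> N (\<lambda>s. u s - v s) \<le> N u + N v"
  using N_tri[of u "\<lambda>s. (-1) *\<^sub>R v s"] V_scale[of v "-1"] N_hom[of v "-1"] by simp

lemma N_sym: "u \<in> V \<Longrightarrow> v \<in> V \<Longrightarrow> N (\<lambda>s. u s - v s) = N (\<lambda>s. v s - u s)"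
  using N_hom[OF V_diff[of v u], of "-1"] by simp

lemma N_ge: "u \<in> V \<Longrightarrow> v \<in> V \<Longrightarrow> N u \<le> N v + N (\<lambda>s. u s - v s)"
  using N_tri[OF _ V_diff[of u v], of v] by (simp add: add.commute)

lemma N_tri3: "u \<in> V \<Longrightarrow> v \<in> V \<Longrightarrow> w \<in> V \<Longrightarrow> N (\<lambda>s. u s - w s) \<le> N (\<lambda>s. u s - v s) + N (\<lambda>s. v s - w s)"
  using N_tri[OF V_diff[of u v] V_diff[of v w]] by simp


lemma fd:
  assumes "finite B" "B \<subseteq> V"
  shows "(\<exists>K\<ge>0. \<forall>c. \<exists>c'. N (\<lambda>s. lc B c s - lc B c' s) = 0 \<and> (\<Sum>g\<in>B. \<bar>c' g\<bar>) \<le> K * N (lc B c))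
     \<and> (\<forall>h\<in>V. (\<forall>e>0. \<exists>c. N (\<lambda>s. h s - lc B c s) < e) \<longrightarrow> (\<exists>c. N (\<lambda>s. h s - lc B c s) = 0))"
  using assms
proof (induction B rule: finite_induct)
  case empty
  show ?case
  proof
    show "\<exists>K\<ge>0. \<forall>c. \<exists>c'. N (\<lambda>s. lc {} c s - lc {} c' s) = 0 \<and> (\<Sum>g\<in>{}. \<bar>c' g\<bar>) \<le> K * N (lc {} c)"
      by (rule exI[of _ 0]) (simp add: N_zero)
    show "\<forall>h\<in>V. (\<forall>e>0. \<exists>c. N (\<lambda>s. h s - lc {} c s) < e) \<longrightarrow> (\<exists>c. N (\<lambda>s. h s - lc {} c s) = 0)"
    proof (intro ballI impI)
      fix h assume h: "h \<in> V" and a: "\<forall>e>0. \<exists>c. N (\<lambda>s. h s - lc {} c s) < e"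
      have "N h \<le> 0"
      proof (rule field_le_epsilon)
        fix e :: real assume "0 < e" with a show "N h \<le> 0 + e" by fastforce
      qed
      with N_nonneg[OF h] show "\<exists>c. N (\<lambda>s. h s - lc {} c s) = 0" by simp
    qed
  qed
next
  case (insert h0 B)
  have BV: "B \<subseteq> V" and h0V: "h0 \<in> V" using insert.prems by auto
  from insert.IH[OF BV] obtain K where K: "K \<ge> 0"
    "\<And>c. \<exists>c'. N (\<lambda>s. lc B c s - lc B c' s) = 0 \<and> (\<Sum>g\<in>B. \<bar>c' g\<bar>) \<le> K * N (lc B c)"
    and cl: "\<And>h. h \<in> V \<Longrightarrow> (\<forall>e>0. \<exists>c. N (\<lambda>s. h s - lc B c s) < e) \<Longrightarrow> (\<exists>c. N (\<lambda>s. h s - lc B c s) = 0)"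
    by blast
  have lcV: "\<And>c. lc B c \<in> V" using V_lc[OF insert.hyps(1) BV] .
  have lcI: "\<And>c. lc (insert h0 B) c = (\<lambda>s. c h0 *\<^sub>R h0 s + lc B c s)"
    using lc_insert[OF insert.hyps] .
  have lcIV: "\<And>c. lc (insert h0 B) c \<in> V"
    using V_lc[OF _ insert.prems] insert.hyps by simp
  show ?case
  proof (cases "\<exists>d. N (\<lambda>s. h0 s - lc B d s) = 0")
    case True
    then obtain d where d: "N (\<lambda>s. h0 s - lc B d s) = 0" by blast
    have dV: "(\<lambda>s. h0 s - lc B d s) \<in> V" using V_diff[OF h0V lcV] .
    have red: "N (\<lambda>s. lc (insert h0 B) c s - lc B (\<lambda>g. 1 * c g + c h0 * d g) s) = 0" for c
    proof -
      have "(\<lambda>s. lc (insert h0 B) c s - lc B (\<lambda>g. 1 * c g + c h0 * d g) s)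
          = (\<lambda>s. c h0 *\<^sub>R (h0 s - lc B d s))"
        unfolding lcI lc_lin by (auto simp: algebra_simps)
      then show ?thesis using N_hom[OF dV, of "c h0"] d by simp
    qed
    show ?thesis
    proof
      show "\<exists>K\<ge>0. \<forall>c. \<exists>c'. N (\<lambda>s. lc (insert h0 B) c s - lc (insert h0 B) c' s) = 0 \<and>
          (\<Sum>g\<in>insert h0 B. \<bar>c' g\<bar>) \<le> K * N (lc (insert h0 B) c)"
      proof (intro exI[of _ K] conjI allI)
        show "K \<ge> 0" by fact
        fix c
        define c1 where "c1 = (\<lambda>g. 1 * c g + c h0 * d g)"
        obtain c2 where c2: "N (\<lambda>s. lc B c1 s - lc B c2 s) = 0" "(\<Sum>g\<in>B. \<bar>c2 g\<bar>) \<le> K * N (lc B c1)"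
          using K(2) by blast
        have e1: "N (\<lambda>s. lc (insert h0 B) c s - lc B c1 s) = 0" using red c1_def by simp
        have "N (\<lambda>s. lc (insert h0 B) c s - lc B c2 s) \<le> 0"
          using N_tri3[of "lc (insert h0 B) c" "lc B c1" "lc B c2"] lcIV lcV e1 c2(1) by simp
        moreover have "lc (insert h0 B) (c2(h0 := 0)) = lc B c2"
          unfolding lcI using lc_upd[OF insert.hyps(2)] by simp
        moreover have "N (lc B c1) \<le> N (lc (insert h0 B) c)"
          using N_ge[OF lcV lcIV, of c1 c] N_sym[OF lcIV lcV, of c c1] e1 by simp
        moreover have "(\<Sum>g\<in>insert h0 B. \<bar>(c2(h0 := 0)) g\<bar>) = (\<Sum>g\<in>B. \<bar>c2 g\<bar>)"
          using insert.hyps by (simp add: sum.insert) (intro sum.cong, auto)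
        ultimately show "\<exists>c'. N (\<lambda>s. lc (insert h0 B) c s - lc (insert h0 B) c' s) = 0 \<and>
          (\<Sum>g\<in>insert h0 B. \<bar>c' g\<bar>) \<le> K * N (lc (insert h0 B) c)"
          using c2(2) K(1) N_nonneg[OF V_diff[OF lcIV lcV, of c c2]]
          by (intro exI[of _ "c2(h0 := 0)"]) (auto intro: order_trans mult_left_mono)
      qed
      show "\<forall>h\<in>V. (\<forall>e>0. \<exists>c. N (\<lambda>s. h s - lc (insert h0 B) c s) < e) \<longrightarrow>
          (\<exists>c. N (\<lambda>s. h s - lc (insert h0 B) c s) = 0)"
      proof (intro ballI impI)
        fix h assume hV: "h \<in> V" and a: "\<forall>e>0. \<exists>c. N (\<lambda>s. h s - lc (insert h0 B) c s) < e"
        have "\<forall>e>0. \<exists>c. N (\<lambda>s. h s - lc B c s) < e"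
        proof (intro allI impI)
          fix e :: real assume "e > 0"
          then obtain c where c: "N (\<lambda>s. h s - lc (insert h0 B) c s) < e" using a by blast
          have "N (\<lambda>s. h s - lc B (\<lambda>g. 1 * c g + c h0 * d g) s) \<le>
              N (\<lambda>s. h s - lc (insert h0 B) c s) + N (\<lambda>s. lc (insert h0 B) c s - lc B (\<lambda>g. 1 * c g + c h0 * d g) s)"
            using N_tri3[OF hV lcIV lcV] by blast
          with red c show "\<exists>c. N (\<lambda>s. h s - lc B c s) < e" by (intro exI[of _ "\<lambda>g. 1 * c g + c h0 * d g"]) auto
        qed
        from cl[OF hV this] obtain c where "N (\<lambda>s. h s - lc B c s) = 0" by blast
        moreover have "lc (insert h0 B) (c(h0 := 0)) = lc B c"
          unfolding lcI using lc_upd[OF insert.hyps(2)] by simp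
        ultimately show "\<exists>c. N (\<lambda>s. h s - lc (insert h0 B) c s) = 0" by (intro exI[of _ "c(h0 := 0)"]) simp
      qed
    qed
  next
    case False
    have "\<exists>\<delta>>0. \<forall>d. N (\<lambda>s. h0 s - lc B d s) \<ge> \<delta>"
    proof (rule ccontr)
      assume "\<not> ?thesis"
      then have "\<forall>e>0. \<exists>d. N (\<lambda>s. h0 s - lc B d s) < e" by (auto simp: not_le)
      from cl[OF h0V this] False show False by blast
    qed
    then obtain \<delta> where \<delta>: "\<delta> > 0" "\<And>d. N (\<lambda>s. h0 s - lc B d s) \<ge> \<delta>" by blast
    have key: "\<bar>t\<bar> * \<delta> \<le> N (\<lambda>s. t *\<^sub>R h0 s + lc B c s)" for t c
    proof (cases "t = 0")
      case True then show ?thesis using N_nonneg[OF lcV] by simp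
    next
      case False
      have "(\<lambda>s. t *\<^sub>R h0 s + lc B c s) = (\<lambda>s. t *\<^sub>R (h0 s - lc B (\<lambda>g. (- 1 / t) * c g + 0 * c g) s))"
        unfolding lc_lin using False by (auto simp: algebra_simps)
      then have "N (\<lambda>s. t *\<^sub>R h0 s + lc B c s) = \<bar>t\<bar> * N (\<lambda>s. h0 s - lc B (\<lambda>g. (- 1 / t) * c g + 0 * c g) s)"
        using N_hom[OF V_diff[OF h0V lcV]] by simp
      then show ?thesis using \<delta>(2) by (simp add: mult_left_mono)
    qed
    show ?thesis
    proof
      define K' where "K' = 1 / \<delta> + K * (1 + N h0 / \<delta>)"
      have Nh0: "N h0 \<ge> 0" using N_nonneg[OF h0V] .
      show "\<exists>K\<ge>0. \<forall>c. \<exists>c'. N (\<lambda>s. lc (insert h0 B) c s - lc (insert h0 B) c' s) = 0 \<and>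
          (\<Sum>g\<in>insert h0 B. \<bar>c' g\<bar>) \<le> K * N (lc (insert h0 B) c)"
      proof (intro exI[of _ K'] conjI allI)
        show "K' \<ge> 0" unfolding K'_def using \<delta> K Nh0 by simp
        fix c
        define F where "F = lc (insert h0 B) c"
        have FV: "F \<in> V" unfolding F_def by (rule lcIV)
        have NF: "N F \<ge> 0" using N_nonneg[OF FV] .
        have t: "\<bar>c h0\<bar> \<le> N F / \<delta>"
          using key[of "c h0" c] \<delta>(1) unfolding F_def lcI by (simp add: field_simps)
        have "lc B c = (\<lambda>s. F s + (- c h0) *\<^sub>R h0 s)" unfolding F_def lcI by auto
        then have "N (lc B c) \<le> N F + \<bar>c h0\<bar> * N h0"
          using N_tri[OF FV V_scale[OF h0V, of "- c h0"]] N_hom[OF h0V, of "- c h0"] by simp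
        also have "\<dots> \<le> N F + N F / \<delta> * N h0" using mult_right_mono[OF t Nh0] by simp
        finally have NB: "N (lc B c) \<le> N F * (1 + N h0 / \<delta>)" by (simp add: algebra_simps)
        obtain c2 where c2: "N (\<lambda>s. lc B c s - lc B c2 s) = 0" "(\<Sum>g\<in>B. \<bar>c2 g\<bar>) \<le> K * N (lc B c)"
          using K(2) by blast
        have "lc (insert h0 B) (c2(h0 := c h0)) = (\<lambda>s. c h0 *\<^sub>R h0 s + lc B c2 s)"
          unfolding lcI using lc_upd[OF insert.hyps(2)] by simp
        then have "(\<lambda>s. lc (insert h0 B) c s - lc (insert h0 B) (c2(h0 := c h0)) s) = (\<lambda>s. lc B c s - lc B c2 s)"
          unfolding lcI using lc_upd[OF insert.hyps(2)] by simp
        moreover have "(\<Sum>g\<in>insert h0 B. \<bar>(c2(h0 := c h0)) g\<bar>) = \<bar>c h0\<bar> + (\<Sum>g\<in>B. \<bar>c2 g\<bar>)"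
          using insert.hyps by (simp add: sum.insert) (intro sum.cong, auto)
        moreover have "\<bar>c h0\<bar> + (\<Sum>g\<in>B. \<bar>c2 g\<bar>) \<le> K' * N F"
        proof -
          have "K * N (lc B c) \<le> K * (N F * (1 + N h0 / \<delta>))" using NB K(1) by (rule mult_left_mono)
          then have "\<bar>c h0\<bar> + (\<Sum>g\<in>B. \<bar>c2 g\<bar>) \<le> N F / \<delta> + K * (N F * (1 + N h0 / \<delta>))"
            using t c2(2) by linarith
          also have "\<dots> = K' * N F" unfolding K'_def by (simp add: algebra_simps)
          finally show ?thesis .
        qed
        ultimately show "\<exists>c'. N (\<lambda>s. lc (insert h0 B) c s - lc (insert h0 B) c' s) = 0 \<and>
          (\<Sum>g\<in>insert h0 B. \<bar>c' g\<bar>) \<le> K' * N (lc (insert h0 B) c)"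
          using c2(1) unfolding F_def by (intro exI[of _ "c2(h0 := c h0)"]) simp
      qed
      show "\<forall>h\<in>V. (\<forall>e>0. \<exists>c. N (\<lambda>s. h s - lc (insert h0 B) c s) < e) \<longrightarrow>
          (\<exists>c. N (\<lambda>s. h s - lc (insert h0 B) c s) = 0)"
      proof (intro ballI impI)
        fix h assume hV: "h \<in> V" and a: "\<forall>e>0. \<exists>c. N (\<lambda>s. h s - lc (insert h0 B) c s) < e"
        have "\<forall>k. \<exists>c. N (\<lambda>s. h s - lc (insert h0 B) c s) < 1 / Suc k" using a by simp
        then obtain cs where cs: "\<And>k. N (\<lambda>s. h s - lc (insert h0 B) (cs k) s) < 1 / Suc k" by metis
        define t where "t k = cs k h0" for k
        have tc: "\<bar>t m - t n\<bar> * \<delta> < 1 / Suc m + 1 / Suc n" for m n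
        proof -
          have "(\<lambda>s. (t m - t n) *\<^sub>R h0 s + lc B (\<lambda>g. 1 * cs m g + (-1) * cs n g) s)
              = (\<lambda>s. (h s - lc (insert h0 B) (cs n) s) - (h s - lc (insert h0 B) (cs m) s))"
            unfolding lc_lin lcI t_def by (auto simp: algebra_simps)
          then have "\<bar>t m - t n\<bar> * \<delta> \<le> N (\<lambda>s. (h s - lc (insert h0 B) (cs n) s) - (h s - lc (insert h0 B) (cs m) s))"
            using key[of "t m - t n" "\<lambda>g. 1 * cs m g + (-1) * cs n g"] by (simp only:)
          also have "\<dots> \<le> N (\<lambda>s. h s - lc (insert h0 B) (cs n) s) + N (\<lambda>s. h s - lc (insert h0 B) (cs m) s)"
            using N_diff_le[OF V_diff[OF hV lcIV] V_diff[OF hV lcIV]] by blast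
          also have "\<dots> < 1 / Suc m + 1 / Suc n" using cs[of m] cs[of n] by simp
          finally show ?thesis .
        qed
        have "Cauchy t"
        proof (rule metric_CauchyI)
          fix e :: real assume "e > 0"
          then have "e * \<delta> / 2 > 0" using \<delta> by simp
          from reals_Archimedean[OF this] obtain M where "inverse (real (Suc M)) < e * \<delta> / 2" by blast
          then have M: "1 / real (Suc M) < e * \<delta> / 2" by (simp add: inverse_eq_divide)
          show "\<exists>M. \<forall>m\<ge>M. \<forall>n\<ge>M. dist (t m) (t n) < e"
          proof (intro exI[of _ M] allI impI)
            fix m n assume "m \<ge> M" "n \<ge> M"
            then have "1 / real (Suc m) \<le> 1 / real (Suc M)" "1 / real (Suc n) \<le> 1 / real (Suc M)"
              by (auto intro!: divide_left_mono)
            with tc[of m n] M have "\<bar>t m - t n\<bar> * \<delta> < e * \<delta>" by linarith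
            with \<delta>(1) show "dist (t m) (t n) < e" by (simp add: dist_real_def)
          qed
        qed
        then obtain t0 where t0: "t \<longlonglongrightarrow> t0" using Cauchy_convergent_iff convergent_def by blast
        define h' where "h' = (\<lambda>s. h s - t0 *\<^sub>R h0 s)"
        have h'V: "h' \<in> V" unfolding h'_def using V_diff[OF hV V_scale[OF h0V]] .
        have "\<forall>e>0. \<exists>c. N (\<lambda>s. h' s - lc B c s) < e"
        proof (intro allI impI)
          fix e :: real assume e: "e > 0"
          have l1: "(\<lambda>k. \<bar>t k - t0\<bar> * N h0) \<longlonglongrightarrow> 0"
            using tendsto_mult_left_zero[OF tendsto_rabs_zero[OF LIM_zero[OF t0]]] by simp
          have l2: "(\<lambda>k. 1 / real (Suc k)) \<longlonglongrightarrow> 0" using LIMSEQ_inverse_real_of_nat by (simp add: inverse_eq_divide)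
          have "eventually (\<lambda>k. \<bar>t k - t0\<bar> * N h0 < e / 2 \<and> 1 / real (Suc k) < e / 2) sequentially"
            using order_tendstoD(2)[OF l1, of "e/2"] order_tendstoD(2)[OF l2, of "e/2"] e
            by (auto intro: eventually_conj)
          then have "\<exists>N0. \<forall>k\<ge>N0. \<bar>t k - t0\<bar> * N h0 < e / 2 \<and> 1 / real (Suc k) < e / 2"
            by (simp add: eventually_sequentially)
          then obtain N0 where "\<forall>k\<ge>N0. \<bar>t k - t0\<bar> * N h0 < e / 2 \<and> 1 / real (Suc k) < e / 2" by blast
          then obtain k where k: "\<bar>t k - t0\<bar> * N h0 < e / 2" "1 / real (Suc k) < e / 2" by blast
          have "(\<lambda>s. h' s - lc B (cs k) s) = (\<lambda>s. (h s - lc (insert h0 B) (cs k) s) + (t k - t0) *\<^sub>R h0 s)"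
            unfolding h'_def lcI t_def by (auto simp: algebra_simps)
          then have "N (\<lambda>s. h' s - lc B (cs k) s) \<le> N (\<lambda>s. h s - lc (insert h0 B) (cs k) s) + \<bar>t k - t0\<bar> * N h0"
            using N_tri[OF V_diff[OF hV lcIV] V_scale[OF h0V], of "cs k" "t k - t0"] N_hom[OF h0V, of "t k - t0"] by (simp only:)
          also have "\<dots> < e" using cs[of k] k by linarith
          finally show "\<exists>c. N (\<lambda>s. h' s - lc B c s) < e" by blast
        qed
        from cl[OF h'V this] obtain d where d: "N (\<lambda>s. h' s - lc B d s) = 0" by blast
        have "lc (insert h0 B) (d(h0 := t0)) = (\<lambda>s. t0 *\<^sub>R h0 s + lc B d s)"
          unfolding lcI using lc_upd[OF insert.hyps(2)] by simp
        then have "(\<lambda>s. h s - lc (insert h0 B) (d(h0 := t0)) s) = (\<lambda>s. h' s - lc B d s)"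
          unfolding h'_def by (auto simp: algebra_simps)
        with d show "\<exists>c. N (\<lambda>s. h s - lc (insert h0 B) c s) = 0" by metis
      qed
    qed
  qed
qed

end


lemma sm_simple: "simple_function M f \<Longrightarrow> strongly_measurable M f"
  unfolding strongly_measurable_def by (intro exI[of _ "\<lambda>n. f"]) auto

lemma sm_add:
  assumes "strongly_measurable M f" "strongly_measurable M g"
  shows "strongly_measurable M (\<lambda>x. f x + g x)"
proof -
  obtain s where s: "\<And>n. simple_function M (s n)" "AE x in M. (\<lambda>n. s n x) \<longlonglongrightarrow> f x"
    using assms(1) unfolding strongly_measurable_def by blast
  obtain t where t: "\<And>n. simple_function M (t n)" "AE x in M. (\<lambda>n. t n x) \<longlonglongrightarrow> g x"
    using assms(2) unfolding strongly_measurable_def by blast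
  show ?thesis unfolding strongly_measurable_def
  proof (intro exI[of _ "\<lambda>n x. s n x + t n x"] conjI allI)
    show "simple_function M (\<lambda>x. s n x + t n x)" for n using s(1) t(1) by blast
    show "AE x in M. (\<lambda>n. s n x + t n x) \<longlonglongrightarrow> f x + g x"
      using s(2) t(2) by eventually_elim (rule tendsto_add)
  qed
qed

lemma sm_scale:
  assumes "strongly_measurable M f"
  shows "strongly_measurable M (\<lambda>x. a *\<^sub>R f x)"
proof -
  obtain s where s: "\<And>n. simple_function M (s n)" "AE x in M. (\<lambda>n. s n x) \<longlonglongrightarrow> f x"
    using assms(1) unfolding strongly_measurable_def by blast
  show ?thesis unfolding strongly_measurable_def
  proof (intro exI[of _ "\<lambda>n x. a *\<^sub>R s n x"] conjI allI)
    show "simple_function M (\<lambda>x. a *\<^sub>R s n x)" for n using simple_function_compose1[OF s(1)] by blast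
    show "AE x in M. (\<lambda>n. a *\<^sub>R s n x) \<longlonglongrightarrow> a *\<^sub>R f x"
      using s(2) by eventually_elim (rule tendsto_scaleR[OF tendsto_const])
  qed
qed

lemma complete_AE_meas:
  fixes f g :: "'a \<Rightarrow> 'x::topological_space"
  assumes "complete_measure M" "g \<in> borel_measurable M" "AE x in M. f x = g x"
  shows "f \<in> borel_measurable M"
proof (rule borel_measurableI)
  fix S :: "'x set" assume "open S"
  then have A: "g -` S \<inter> space M \<in> sets M" using assms(2) by (simp add: measurable_sets borel_open)
  have "AE x in M. x \<in> g -` S \<inter> space M \<longleftrightarrow> x \<in> f -` S \<inter> space M"
    using assms(3) AE_space by eventually_elim auto
  from complete_measure.in_sets_AE[OF assms(1) this A] show "f -` S \<inter> space M \<in> sets M" by auto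
qed

lemma sm_norm_meas:
  assumes "complete_measure M" "strongly_measurable M f"
  shows "(\<lambda>x. norm (f x)) \<in> borel_measurable M"
proof -
  obtain s where s: "\<And>n. simple_function M (s n)" "AE x in M. (\<lambda>n. s n x) \<longlonglongrightarrow> f x"
    using assms(2) unfolding strongly_measurable_def by blast
  define g where "g x = real_of_ereal (liminf (\<lambda>n. ereal (norm (s n x))))" for x
  have "(\<lambda>x. ereal (norm (s n x))) \<in> borel_measurable M" for n
    using borel_measurable_simple_function[OF s(1)[of n]] by measurable
  then have "(\<lambda>x. liminf (\<lambda>n. ereal (norm (s n x)))) \<in> borel_measurable M"
    by (rule borel_measurable_liminf)
  then have gm: "g \<in> borel_measurable M" unfolding g_def by measurable
  have "AE x in M. norm (f x) = g x"
    using s(2)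
  proof eventually_elim
    case (elim x)
    then have "(\<lambda>n. ereal (norm (s n x))) \<longlonglongrightarrow> ereal (norm (f x))"
      by (intro tendsto_ereal tendsto_norm)
    then have "liminf (\<lambda>n. ereal (norm (s n x))) = ereal (norm (f x))"
      by (rule lim_imp_Liminf[OF sequentially_bot])
    then show ?case unfolding g_def by simp
  qed
  from complete_AE_meas[OF assms(1) gm this] show ?thesis .
qed

lemma sm_zero: "strongly_measurable M (\<lambda>x. 0)"
  by (rule sm_simple) simp

lemma L1_int:
  assumes "complete_measure M" "f \<in> L1_space M"
  shows "integrable M (\<lambda>x. norm (f x))" "L1_norm M f = (\<integral>x. norm (f x) \<partial>M)"
proof -
  have m: "(\<lambda>x. norm (f x)) \<in> borel_measurable M" "(\<integral>\<^sup>+ x. ennreal (norm (f x)) \<partial>M) < \<infinity>"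
    using assms sm_norm_meas unfolding L1_space_def by auto
  show i: "integrable M (\<lambda>x. norm (f x))"
    by (rule integrableI_bounded) (use m in auto)
  have "(\<integral>\<^sup>+ x. ennreal (norm (f x)) \<partial>M) = ennreal (\<integral>x. norm (f x) \<partial>M)"
    by (rule nn_integral_eq_integral[OF i]) auto
  then show "L1_norm M f = (\<integral>x. norm (f x) \<partial>M)"
    unfolding L1_norm_def by simp
qed

lemma L1_snorm:
  assumes c: "complete_measure M"
  shows "snorm (L1_space M) (L1_norm M)"
proof
  show "(\<lambda>s. 0) \<in> L1_space M" unfolding L1_space_def using sm_zero by auto
next
  fix u v :: "'a \<Rightarrow> 'b" assume u: "u \<in> L1_space M" and v: "v \<in> L1_space M"
  have mu: "(\<lambda>x. norm (u x)) \<in> borel_measurable M" and mv: "(\<lambda>x. norm (v x)) \<in> borel_measurable M"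
    using u v sm_norm_meas[OF c] unfolding L1_space_def by auto
  have "(\<integral>\<^sup>+ x. ennreal (norm (u x + v x)) \<partial>M) \<le> (\<integral>\<^sup>+ x. ennreal (norm (u x)) + ennreal (norm (v x)) \<partial>M)"
    by (intro nn_integral_mono) (simp add: ennreal_plus[symmetric] norm_triangle_ineq del: ennreal_plus)
  also have "\<dots> = (\<integral>\<^sup>+ x. ennreal (norm (u x)) \<partial>M) + (\<integral>\<^sup>+ x. ennreal (norm (v x)) \<partial>M)"
    by (rule nn_integral_add) (use mu mv in auto)
  also have "\<dots> < \<infinity>" using u v unfolding L1_space_def by auto
  finally show uv: "(\<lambda>s. u s + v s) \<in> L1_space M"
    using u v sm_add unfolding L1_space_def by auto
  have "(\<integral>x. norm (u x + v x) \<partial>M) \<le> (\<integral>x. norm (u x) + norm (v x) \<partial>M)"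
    by (rule integral_mono[OF L1_int(1)[OF c uv] Bochner_Integration.integrable_add[OF L1_int(1)[OF c u] L1_int(1)[OF c v]]]) (metis norm_triangle_ineq)
  then show "L1_norm M (\<lambda>s. u s + v s) \<le> L1_norm M u + L1_norm M v"
    using L1_int[OF c uv] L1_int[OF c u] L1_int[OF c v] by simp
next
  fix u :: "'a \<Rightarrow> 'b" and a :: real assume u: "u \<in> L1_space M"
  have mu: "(\<lambda>x. norm (u x)) \<in> borel_measurable M"
    using u sm_norm_meas[OF c] unfolding L1_space_def by auto
  have "(\<integral>\<^sup>+ x. ennreal (norm (a *\<^sub>R u x)) \<partial>M) = (\<integral>\<^sup>+ x. ennreal \<bar>a\<bar> * ennreal (norm (u x)) \<partial>M)"
    by (simp add: ennreal_mult)
  also have "\<dots> = ennreal \<bar>a\<bar> * (\<integral>\<^sup>+ x. ennreal (norm (u x)) \<partial>M)"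
    by (rule nn_integral_cmult) (use mu in auto)
  also have "\<dots> < \<infinity>" using u unfolding L1_space_def by (simp add: ennreal_mult_less_top)
  finally show us: "(\<lambda>s. a *\<^sub>R u s) \<in> L1_space M"
    using u sm_scale unfolding L1_space_def by auto
  show "L1_norm M (\<lambda>s. a *\<^sub>R u s) = \<bar>a\<bar> * L1_norm M u"
    using L1_int[OF c us] L1_int[OF c u] by simp
next
  fix u :: "'a \<Rightarrow> 'b" assume "u \<in> L1_space M"
  show "L1_norm M u \<ge> 0" unfolding L1_norm_def by simp
qed

lemma Linf_eq:
  assumes c: "complete_measure M" and ne: "emeasure M (space M) \<noteq> 0" and u: "u \<in> Linf_space M"
  shows "ereal (Linf_norm M u) = esssup M (\<lambda>x. ereal (norm (u x)))" "Linf_norm M u \<ge> 0"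
    "(\<lambda>x. ereal (norm (u x))) \<in> borel_measurable M"
proof -
  show m: "(\<lambda>x. ereal (norm (u x))) \<in> borel_measurable M"
  proof -
    have "(\<lambda>x. norm (u x)) \<in> borel_measurable M" using sm_norm_meas[OF c] u unfolding Linf_space_def by blast
    then show ?thesis by measurable
  qed
  have "esssup M (\<lambda>x. ereal 0) \<le> esssup M (\<lambda>x. ereal (norm (u x)))"
    by (rule esssup_mono) auto
  then have "0 \<le> esssup M (\<lambda>x. ereal (norm (u x)))" using esssup_const[OF ne, of "0::ereal"] by (simp add: zero_ereal_def)
  moreover have "esssup M (\<lambda>x. ereal (norm (u x))) < \<infinity>" using u unfolding Linf_space_def by auto
  ultimately show "ereal (Linf_norm M u) = esssup M (\<lambda>x. ereal (norm (u x)))" "Linf_norm M u \<ge> 0"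
    unfolding Linf_norm_def by (auto simp: ereal_real real_of_ereal_pos)
qed

lemma Linf_snorm:
  assumes c: "complete_measure M" and ne: "emeasure M (space M) \<noteq> 0"
  shows "snorm (Linf_space M) (Linf_norm M)"
proof
  have "esssup M (\<lambda>x. ereal (norm (0::'b))) = 0" using esssup_const[OF ne, of "0::ereal"] by (simp add: zero_ereal_def)
  then show "(\<lambda>s. 0) \<in> Linf_space M" unfolding Linf_space_def using sm_zero by auto
next
  fix u v :: "'a \<Rightarrow> 'b" assume u: "u \<in> Linf_space M" and v: "v \<in> Linf_space M"
  have "esssup M (\<lambda>x. ereal (norm (u x + v x))) \<le> esssup M (\<lambda>x. ereal (norm (u x)) + ereal (norm (v x)))"
  proof (rule esssup_mono)
    have "(\<lambda>x. norm (u x + v x)) \<in> borel_measurable M"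
      using sm_norm_meas[OF c sm_add] u v unfolding Linf_space_def by auto
    then show "(\<lambda>x. ereal (norm (u x + v x))) \<in> borel_measurable M" by measurable
  qed (simp add: norm_triangle_ineq)
  also have "\<dots> \<le> esssup M (\<lambda>x. ereal (norm (u x))) + esssup M (\<lambda>x. ereal (norm (v x)))"
    by (rule esssup_add)
  also have "\<dots> = ereal (Linf_norm M u + Linf_norm M v)"
    by (metis Linf_eq(1)[OF c ne u] Linf_eq(1)[OF c ne v] plus_ereal.simps(1))
  finally have *: "esssup M (\<lambda>x. ereal (norm (u x + v x))) \<le> ereal (Linf_norm M u + Linf_norm M v)" .
  then show uv: "(\<lambda>s. u s + v s) \<in> Linf_space M"
    using u v sm_add unfolding Linf_space_def by (auto intro: le_less_trans)
  show "Linf_norm M (\<lambda>s. u s + v s) \<le> Linf_norm M u + Linf_norm M v"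
    using * Linf_eq(1)[OF c ne uv] by (metis ereal_less_eq(3))
next
  fix u :: "'a \<Rightarrow> 'b" and a :: real assume u: "u \<in> Linf_space M"
  have e: "esssup M (\<lambda>x. ereal (norm (a *\<^sub>R u x))) = ereal (\<bar>a\<bar> * Linf_norm M u)"
  proof (cases "a = 0")
    case True then show ?thesis using esssup_const[OF ne, of "0::ereal"] by (simp add: zero_ereal_def)
  next
    case False
    have "esssup M (\<lambda>x. ereal (norm (a *\<^sub>R u x))) = esssup M (\<lambda>x. ereal \<bar>a\<bar> * ereal (norm (u x)))"
      by simp
    also have "\<dots> = ereal \<bar>a\<bar> * esssup M (\<lambda>x. ereal (norm (u x)))"
      by (rule esssup_cmult) (use False in simp)
    also have "\<dots> = ereal (\<bar>a\<bar> * Linf_norm M u)" by (metis Linf_eq(1)[OF c ne u] times_ereal.simps(1))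
    finally show ?thesis .
  qed
  then show us: "(\<lambda>s. a *\<^sub>R u s) \<in> Linf_space M"
    using u sm_scale unfolding Linf_space_def by auto
  show "Linf_norm M (\<lambda>s. a *\<^sub>R u s) = \<bar>a\<bar> * Linf_norm M u"
    using e Linf_eq(1)[OF c ne us] by simp
next
  fix u :: "'a \<Rightarrow> 'b" assume "u \<in> Linf_space M"
  then show "Linf_norm M u \<ge> 0" using Linf_eq[OF c ne] by blast
qed



lemma tup_simple:
  assumes "finite B" "\<And>g. g \<in> B \<Longrightarrow> simple_function M (F g)"
  shows "simple_function M (\<lambda>x. \<lambda>g. if g \<in> B then F g x else 0)"
  using assms
proof (induction B rule: finite_induct)
  case empty then show ?case by simp
next
  case (insert h B)
  have "(\<lambda>x. \<lambda>g. if g \<in> insert h B then F g x else 0) = (\<lambda>x. (\<lambda>t v. t(h := v)) (\<lambda>g. if g \<in> B then F g x else 0) (F h x))"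
    by (auto simp: fun_eq_iff)
  moreover have "simple_function M (\<lambda>x. (\<lambda>t v. t(h := v)) (\<lambda>g. if g \<in> B then F g x else 0) (F h x))"
    using simple_function_compose2[of M "\<lambda>x. \<lambda>g. if g \<in> B then F g x else 0" "F h" "\<lambda>t v. t(h := v)"] insert by simp
  ultimately show ?case by simp
qed

lemma partition:
  fixes M :: "'a measure" and B :: "('a \<Rightarrow> 'b::real_normed_vector) set"
  assumes fin: "finite B" and sm: "\<And>g. g \<in> B \<Longrightarrow> strongly_measurable M g" and dp: "\<delta> > 0"
  obtains T :: "nat \<Rightarrow> 'a \<Rightarrow> ('a \<Rightarrow> 'b) \<Rightarrow> 'b" and nx :: "'a \<Rightarrow> nat" where
    "\<And>k. simple_function M (T k)"
    "\<And>k. {x\<in>space M. nx x = k} \<in> sets M"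
    "AE x in M. \<forall>g\<in>B. norm (g x - T (nx x) x g) \<le> \<delta>"
proof -
  have "\<forall>g\<in>B. \<exists>s. (\<forall>n. simple_function M (s n)) \<and> (AE x in M. (\<lambda>n. s n x) \<longlonglongrightarrow> g x)"
    using sm unfolding strongly_measurable_def by blast
  then obtain sq where sq: "\<And>g n. g \<in> B \<Longrightarrow> simple_function M (sq g n)"
    "\<And>g. g \<in> B \<Longrightarrow> AE x in M. (\<lambda>n. sq g n x) \<longlonglongrightarrow> g x"
    by metis
  define T where "T n x = (\<lambda>g. if g \<in> B then sq g n x else 0)" for n x
  have Ts: "simple_function M (T k)" for k
    unfolding T_def by (rule tup_simple[OF fin]) (use sq in auto)
  define E where "E n = {x\<in>space M. \<forall>g\<in>B. \<forall>m. n \<le> m \<longrightarrow> dist (sq g m x) (sq g n x) \<le> \<delta> / 2}" for n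
  have Em: "E n \<in> sets M" for n
    unfolding E_def
  proof (rule sets.sets_Collect_countable_All'[OF _ countable_finite[OF fin]])
    fix g assume g: "g \<in> B"
    show "{x \<in> space M. \<forall>m. n \<le> m \<longrightarrow> dist (sq g m x) (sq g n x) \<le> \<delta> / 2} \<in> sets M"
    proof (rule sets.sets_Collect_countable_All)
      fix m
      have "(\<lambda>x. dist (sq g m x) (sq g n x)) \<in> borel_measurable M"
        by (rule borel_measurable_simple_function, rule simple_function_compose2[OF sq(1)[OF g] sq(1)[OF g]])
      then have "{x \<in> space M. dist (sq g m x) (sq g n x) \<le> \<delta> / 2} \<in> sets M" by measurable
      then show "{x \<in> space M. n \<le> m \<longrightarrow> dist (sq g m x) (sq g n x) \<le> \<delta> / 2} \<in> sets M"
        by (cases "n \<le> m") auto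
    qed
  qed
  define F where "F n = E n \<union> (space M - (\<Union>j. E j))" for n
  have Fm: "F n \<in> sets M" for n unfolding F_def using Em by auto
  have Fex: "\<exists>n. x \<in> F n" if "x \<in> space M" for x
    using that unfolding F_def by blast
  define nx where "nx x = (LEAST n. x \<in> F n)" for x
  have nxF: "x \<in> F (nx x)" if "x \<in> space M" for x
    unfolding nx_def using LeastI_ex[OF Fex[OF that]] .
  have nx_iff: "nx x = k \<longleftrightarrow> x \<in> F k \<and> (\<forall>j<k. x \<notin> F j)" if "x \<in> space M" for x k
  proof
    assume "nx x = k" then show "x \<in> F k \<and> (\<forall>j<k. x \<notin> F j)"
      using nxF[OF that] not_less_Least[of _ "\<lambda>n. x \<in> F n"] unfolding nx_def by blast
  next
    assume a: "x \<in> F k \<and> (\<forall>j<k. x \<notin> F j)"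
    show "nx x = k" unfolding nx_def
      by (rule Least_equality) (use a in \<open>auto simp: not_less[symmetric]\<close>)
  qed
  have nxm: "{x\<in>space M. nx x = k} \<in> sets M" for k
  proof -
    have "{x\<in>space M. nx x = k} = (F k \<inter> space M) - (\<Union>j<k. F j)"
      using nx_iff by auto
    then show ?thesis using Fm by auto
  qed
  have "AE x in M. \<forall>g\<in>B. (\<lambda>n. sq g n x) \<longlonglongrightarrow> g x"
    by (rule AE_finite_allI[OF fin]) (rule sq(2))
  then have "AE x in M. \<forall>g\<in>B. norm (g x - T (nx x) x g) \<le> \<delta>"
    using AE_space
  proof eventually_elim
    case (elim x)
    have ev: "eventually (\<lambda>n. \<forall>g\<in>B. \<forall>m. n \<le> m \<longrightarrow> dist (sq g m x) (sq g n x) \<le> \<delta> / 2) sequentially"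
    proof (rule eventually_ball_finite[OF fin], intro ballI)
      fix g assume g: "g \<in> B"
      have "Cauchy (\<lambda>n. sq g n x)" using elim g by (auto intro: LIMSEQ_imp_Cauchy)
      then obtain M0 where M0: "\<And>m n. m \<ge> M0 \<Longrightarrow> n \<ge> M0 \<Longrightarrow> dist (sq g m x) (sq g n x) < \<delta> / 2"
        unfolding Cauchy_def using dp by (meson half_gt_zero)
      show "eventually (\<lambda>n. \<forall>m. n \<le> m \<longrightarrow> dist (sq g m x) (sq g n x) \<le> \<delta> / 2) sequentially"
        unfolding eventually_sequentially
      proof (rule exI[of _ M0], intro allI impI)
        fix n m assume "M0 \<le> n" "n \<le> m"
        then show "dist (sq g m x) (sq g n x) \<le> \<delta> / 2" using M0[of m n] by simp
      qed
    qed
    then obtain n0 where "\<forall>g\<in>B. \<forall>m. n0 \<le> m \<longrightarrow> dist (sq g m x) (sq g n0 x) \<le> \<delta> / 2"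
      unfolding eventually_sequentially by blast
    then have "x \<in> E n0" unfolding E_def using elim by blast
    then have xE: "x \<in> E (nx x)" using nxF[of x] elim unfolding F_def by blast
    show ?case
    proof
      fix g assume g: "g \<in> B"
      have le: "\<forall>m. nx x \<le> m \<longrightarrow> dist (sq g m x) (sq g (nx x) x) \<le> \<delta> / 2" using xE g unfolding E_def by blast
      have "(\<lambda>m. dist (sq g m x) (sq g (nx x) x)) \<longlonglongrightarrow> dist (g x) (sq g (nx x) x)"
        using elim g by (intro tendsto_dist tendsto_const) auto
      then have "dist (g x) (sq g (nx x) x) \<le> \<delta> / 2"
        by (rule tendsto_upperbound) (use le in \<open>auto simp: eventually_sequentially\<close>)
      then show "norm (g x - T (nx x) x g) \<le> \<delta>" using g dp unfolding T_def by (simp add: dist_norm)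
    qed
  qed
  then show ?thesis using that Ts nxm by blast
qed

lemma sm_piece:
  fixes nx :: "'a \<Rightarrow> nat"
  assumes T: "\<And>k. simple_function M (T k)" and nx: "\<And>k. {x\<in>space M. nx x = k} \<in> sets M"
  shows "strongly_measurable M (\<lambda>x. \<Phi> (T (nx x) x))"
  unfolding strongly_measurable_def
proof (intro exI[of _ "\<lambda>N x. \<Phi> (T (min (nx x) N) x)"] conjI allI)
  fix N show "simple_function M (\<lambda>x. \<Phi> (T (min (nx x) N) x))"
  proof (induction N)
    case 0 then show ?case using simple_function_compose1[OF T[of 0]] by simp
  next
    case (Suc N)
    have eq: "(\<lambda>x. \<Phi> (T (min (nx x) (Suc N)) x)) = (\<lambda>x. if nx x \<le> N then \<Phi> (T (min (nx x) N) x) else \<Phi> (T (Suc N) x))"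
      by (auto simp: fun_eq_iff min_def le_Suc_eq)
    have "{x\<in>space M. nx x \<le> N} = (\<Union>k\<in>{..N}. {x\<in>space M. nx x = k})" by auto
    then have "{x\<in>space M. nx x \<le> N} \<in> sets M" using nx by auto
    then show ?case unfolding eq
      by (rule simple_function_If[OF Suc simple_function_compose1[OF T]])
  qed
next
  show "AE x in M. (\<lambda>N. \<Phi> (T (min (nx x) N) x)) \<longlonglongrightarrow> \<Phi> (T (nx x) x)"
  proof (rule AE_I2, rule tendsto_eventually)
    fix x show "eventually (\<lambda>N. \<Phi> (T (min (nx x) N) x) = \<Phi> (T (nx x) x)) sequentially"
      using eventually_ge_at_top[of "nx x"] by eventually_elim (simp add: min_def)
  qed
qed



lemma pos_fin_set:
  assumes "sigma_finite_measure M" "emeasure M (space M) \<noteq> 0"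
  shows "\<exists>W\<in>sets M. 0 < emeasure M W \<and> emeasure M W < \<infinity>"
proof (rule ccontr)
  assume na: "\<not> ?thesis"
  obtain A :: "nat \<Rightarrow> 'a set" where A: "range A \<subseteq> sets M" "(\<Union>i. A i) = space M" "\<And>i. emeasure M (A i) \<noteq> \<infinity>"
    using sigma_finite_measure.sigma_finite[OF assms(1)] by metis
  have "A i \<in> null_sets M" for i
  proof -
    have Ai: "A i \<in> sets M" using A(1) by auto
    have "emeasure M (A i) < \<infinity>" using A(3)[of i] by (simp add: less_top)
    moreover have "\<not> (0 < emeasure M (A i) \<and> emeasure M (A i) < \<infinity>)" using na Ai by blast
    ultimately have "emeasure M (A i) = 0" by (simp add: not_gr_zero)
    with Ai show ?thesis by (simp add: null_sets_def)
  qed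
  then have "(\<Union>i. A i) \<in> null_sets M" by blast
  with A(2) assms(2) show False by auto
qed

lemma AE_pos_ex:
  assumes "AE x in M. P x" "emeasure M {x\<in>space M. Q x} > 0"
  shows "\<exists>x\<in>space M. P x \<and> Q x"
proof (rule ccontr)
  assume "\<not> ?thesis"
  then have sub: "{x\<in>space M. Q x} \<subseteq> {x\<in>space M. \<not> P x}" by auto
  from assms(1) obtain N where N: "{x \<in> space M. \<not> P x} \<subseteq> N" "emeasure M N = 0" "N \<in> sets M"
    by (rule AE_E)
  have "emeasure M {x\<in>space M. Q x} \<le> emeasure M N"
    by (rule emeasure_mono) (use sub N in auto)
  with N(2) assms(2) show False by simp
qed

lemma oct_get:
  assumes "octahedral TYPE('b::real_normed_vector)" "finite (S::'b set)" "\<eta> > 0"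
  shows "\<exists>y. norm y = 1 \<and> (\<forall>x\<in>span S. norm (x + y) \<ge> (1 - \<eta>) * (norm x + 1))"
  using assms unfolding octahedral_def by blast

lemma oct_scaled:
  fixes y :: "'b::real_normed_vector"
  assumes "\<forall>x\<in>span S. norm (x + y) \<ge> (1 - \<eta>) * (norm x + 1)" "x \<in> span S" "r > 0"
  shows "norm (x + r *\<^sub>R y) \<ge> (1 - \<eta>) * (norm x + r)"
proof -
  have "(1 / r) *\<^sub>R x \<in> span S" using assms(2) by (rule span_mul)
  then have "norm ((1 / r) *\<^sub>R x + y) \<ge> (1 - \<eta>) * (norm ((1 / r) *\<^sub>R x) + 1)" using assms(1) by blast
  then have "r * norm ((1 / r) *\<^sub>R x + y) \<ge> r * ((1 - \<eta>) * (norm ((1 / r) *\<^sub>R x) + 1))"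
    using assms(3) by (intro mult_left_mono) auto
  moreover have "r * norm ((1 / r) *\<^sub>R x + y) = norm (x + r *\<^sub>R y)"
  proof -
    have "x + r *\<^sub>R y = r *\<^sub>R ((1 / r) *\<^sub>R x + y)" using assms(3) by (simp add: algebra_simps)
    then show ?thesis using assms(3) by simp
  qed
  moreover have "r * ((1 - \<eta>) * (norm ((1 / r) *\<^sub>R x) + 1)) = (1 - \<eta>) * (norm x + r)"
  proof -
    have "norm ((1 / r) *\<^sub>R x) = norm x / r" using assms(3) by simp
    then show ?thesis using assms(3) by (simp add: field_simps)
  qed
  ultimately show ?thesis by linarith
qed

lemma lc_err:
  assumes "\<forall>g\<in>B. norm (g x - t g) \<le> \<delta>"
  shows "norm (lc B c x - (\<Sum>g\<in>B. c g *\<^sub>R t g)) \<le> (\<Sum>g\<in>B. \<bar>c g\<bar>) * \<delta>"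
proof -
  have "lc B c x - (\<Sum>g\<in>B. c g *\<^sub>R t g) = (\<Sum>g\<in>B. c g *\<^sub>R (g x - t g))"
    unfolding lc_def by (simp add: sum_subtractf scaleR_diff_right)
  also have "norm \<dots> \<le> (\<Sum>g\<in>B. norm (c g *\<^sub>R (g x - t g)))" by (rule norm_sum)
  also have "\<dots> \<le> (\<Sum>g\<in>B. \<bar>c g\<bar> * \<delta>)"
    using assms by (intro sum_mono) (simp add: mult_left_mono)
  finally show ?thesis by (simp add: sum_distrib_right)
qed

lemma lc_span: "(\<Sum>g\<in>B. c g *\<^sub>R t g) \<in> span (t ` B)"
  by (intro span_sum span_mul span_base) auto

lemma pt_est:
  fixes a X z :: "'b::real_normed_vector"
  assumes "norm (a - X) \<le> e" "norm (X + z) \<ge> (1 - \<eta>) * (norm X + r)" "0 \<le> \<eta>" "\<eta> \<le> 1"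
  shows "norm (a + z) \<ge> (1 - \<eta>) * norm a + (1 - \<eta>) * r - 2 * e"
proof -
  have "norm (X + z) \<le> norm (a + z) + norm (a - X)"
    using norm_triangle_ineq4[of "a + z" "a - X"] by (simp add: algebra_simps)
  moreover have "norm a \<le> norm X + norm (a - X)"
    using norm_triangle_ineq[of X "a - X"] by simp
  then have "(1 - \<eta>) * norm a \<le> (1 - \<eta>) * (norm X + e)"
    using assms by (intro mult_left_mono) auto
  moreover have "(1 - \<eta>) * e \<le> e"
  proof -
    have "e \<ge> 0" using assms(1) norm_ge_zero[of "a - X"] by linarith
    then show ?thesis using assms by (intro mult_left_le_one_le) auto
  qed
  ultimately show ?thesis using assms(1,2) by (simp add: algebra_simps)
qed



lemma Linf_oct:
  fixes M :: "'a measure"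
  assumes c: "complete_measure M" and ne: "emeasure M (space M) \<noteq> 0"
    and oct: "octahedral TYPE('b::banach)"
  shows "octahedral_fs (Linf_space M :: ('a \<Rightarrow> 'b) set) (Linf_norm M)"
  unfolding octahedral_fs_def
proof (intro allI impI)
  fix B :: "('a \<Rightarrow> 'b) set" and \<epsilon> :: real
  assume BB: "finite B \<and> B \<subseteq> Linf_space M" and \<epsilon>: "\<epsilon> > 0"
  have fin: "finite B" and BV: "B \<subseteq> Linf_space M" using BB by auto
  interpret snorm "Linf_space M :: ('a \<Rightarrow> 'b) set" "Linf_norm M" by (rule Linf_snorm[OF c ne])
  obtain K where K: "K \<ge> 0" "\<And>c. \<exists>c'. Linf_norm M (\<lambda>s. lc B c s - lc B c' s) = 0 \<and> (\<Sum>g\<in>B. \<bar>c' g\<bar>) \<le> K * Linf_norm M (lc B c)"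
    using fd[OF fin BV] by blast
  define \<epsilon>1 where "\<epsilon>1 = min \<epsilon> 1"
  have e1: "0 < \<epsilon>1" "\<epsilon>1 \<le> 1" "\<epsilon>1 \<le> \<epsilon>" using \<epsilon> unfolding \<epsilon>1_def by auto
  define \<delta> where "\<delta> = \<epsilon>1 / (4 * (K + 1))"
  have dp: "\<delta> > 0" unfolding \<delta>_def using e1 K by simp
  have Kd: "K * \<delta> \<le> \<epsilon>1 / 4"
  proof -
    have "K * \<delta> = \<epsilon>1 / 4 * (K / (K + 1))" unfolding \<delta>_def by simp
    moreover have "K / (K + 1) \<le> 1" using K by simp
    ultimately show ?thesis using e1 by (metis mult.right_neutral mult_left_mono less_eq_real_def divide_pos_pos zero_less_numeral)
  qed
  have smB: "\<And>g. g \<in> B \<Longrightarrow> strongly_measurable M g" using BV unfolding Linf_space_def by auto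
  obtain T and nx :: "'a \<Rightarrow> nat" where T: "\<And>k. simple_function M (T k)" "\<And>k. {x\<in>space M. nx x = k} \<in> sets M"
    "AE x in M. \<forall>g\<in>B. norm (g x - T (nx x) x g) \<le> \<delta>"
    using partition[OF fin smB dp] by blast
  define Yo where "Yo t = (SOME y. norm y = 1 \<and> (\<forall>x\<in>span (t ` B). norm (x + y) \<ge> (1 - \<epsilon>1 / 2) * (norm x + 1)))"
    for t :: "('a \<Rightarrow> 'b) \<Rightarrow> 'b"
  have Yo: "norm (Yo t) = 1 \<and> (\<forall>x\<in>span (t ` B). norm (x + Yo t) \<ge> (1 - \<epsilon>1 / 2) * (norm x + 1))" for t
    unfolding Yo_def by (rule someI_ex, rule oct_get[OF oct]) (use fin e1 in auto)
  define y where "y x = Yo (T (nx x) x)" for x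
  have ysm: "strongly_measurable M y" unfolding y_def by (rule sm_piece[OF T(1) T(2)])
  have ynorm: "norm (y x) = 1" for x using Yo unfolding y_def by blast
  have esy: "esssup M (\<lambda>x. ereal (norm (y x))) = 1"
    using esssup_const[OF ne, of "1::ereal"] ynorm by (simp add: one_ereal_def)
  have yV: "y \<in> Linf_space M" unfolding Linf_space_def using ysm esy by simp
  have Ny: "Linf_norm M y = 1" unfolding Linf_norm_def using esy by simp
  show "\<exists>y\<in>Linf_space M. Linf_norm M y = 1 \<and> (\<forall>c. Linf_norm M (\<lambda>s. (\<Sum>f\<in>B. c f *\<^sub>R f s) + y s)
      \<ge> (1 - \<epsilon>) * (Linf_norm M (\<lambda>s. \<Sum>f\<in>B. c f *\<^sub>R f s) + 1))"
  proof (intro bexI[of _ y] conjI allI)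
    show "y \<in> Linf_space M" by (rule yV)
    show "Linf_norm M y = 1" by (rule Ny)
    fix c
    obtain c' where c': "Linf_norm M (\<lambda>s. lc B c s - lc B c' s) = 0" "(\<Sum>g\<in>B. \<bar>c' g\<bar>) \<le> K * Linf_norm M (lc B c)"
      using K(2) by blast
    define f where "f = lc B c"
    define f' where "f' = lc B c'"
    define S where "S = (\<Sum>g\<in>B. \<bar>c' g\<bar>)"
    have fV: "f \<in> Linf_space M" unfolding f_def by (rule V_lc[OF fin BV])
    have f'V: "f' \<in> Linf_space M" unfolding f'_def by (rule V_lc[OF fin BV])
    have fyV: "(\<lambda>s. f s + y s) \<in> Linf_space M" by (rule V_add[OF fV yV])
    have f'yV: "(\<lambda>s. f' s + y s) \<in> Linf_space M" by (rule V_add[OF f'V yV])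
    have pw: "AE x in M. norm (f' x + y x) \<ge> (1 - \<epsilon>1 / 2) * norm (f' x) + (1 - \<epsilon>1 / 2) * 1 - 2 * (S * \<delta>)"
      using T(3)
    proof eventually_elim
      case (elim x)
      have "norm (f' x - (\<Sum>g\<in>B. c' g *\<^sub>R T (nx x) x g)) \<le> S * \<delta>"
        using lc_err[OF elim] unfolding f'_def S_def .
      moreover have "norm ((\<Sum>g\<in>B. c' g *\<^sub>R T (nx x) x g) + y x) \<ge> (1 - \<epsilon>1 / 2) * (norm (\<Sum>g\<in>B. c' g *\<^sub>R T (nx x) x g) + 1)"
        using Yo[of "T (nx x) x"] lc_span[of c' "T (nx x) x" B] unfolding y_def by blast
      ultimately show ?case by (rule pt_est) (use e1 in auto)
    qed
    have Nf'eq: "ereal (Linf_norm M f') = esssup M (\<lambda>x. ereal (norm (f' x)))" and mf': "(\<lambda>x. ereal (norm (f' x))) \<in> borel_measurable M"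
      using Linf_eq[OF c ne f'V] by auto
    have Nf'yeq: "ereal (Linf_norm M (\<lambda>s. f' s + y s)) = esssup M (\<lambda>x. ereal (norm (f' x + y x)))"
      using Linf_eq(1)[OF c ne f'yV] by simp
    have main: "(1 - \<epsilon>1 / 2) * (Linf_norm M f' + 1) - 2 * (S * \<delta>) \<le> Linf_norm M (\<lambda>s. f' s + y s)"
    proof (rule field_le_epsilon)
      fix \<eta> :: real assume \<eta>: "\<eta> > 0"
      have lt: "ereal (Linf_norm M f' - \<eta>) < esssup M (\<lambda>x. ereal (norm (f' x)))"
      proof -
        have "ereal (Linf_norm M f' - \<eta>) < ereal (Linf_norm M f')" using \<eta> by simp
        then show ?thesis using Nf'eq by simp
      qed
      have pos: "emeasure M {x\<in>space M. ereal (norm (f' x)) > ereal (Linf_norm M f' - \<eta>)} > 0"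
        by (rule esssup_pos_measure[OF mf' lt])
      have ae2: "AE x in M. ereal (norm (f' x + y x)) \<le> esssup M (\<lambda>x. ereal (norm (f' x + y x)))"
        by (rule esssup_AE)
      obtain x where x: "norm (f' x + y x) \<ge> (1 - \<epsilon>1 / 2) * norm (f' x) + (1 - \<epsilon>1 / 2) * 1 - 2 * (S * \<delta>)"
        "ereal (norm (f' x + y x)) \<le> esssup M (\<lambda>x. ereal (norm (f' x + y x)))"
        "ereal (norm (f' x)) > ereal (Linf_norm M f' - \<eta>)"
        using AE_pos_ex[OF eventually_conj[OF pw ae2] pos] by blast
      have "ereal (norm (f' x + y x)) \<le> ereal (Linf_norm M (\<lambda>s. f' s + y s))" using x(2) Nf'yeq by simp
      then have x1: "norm (f' x + y x) \<le> Linf_norm M (\<lambda>s. f' s + y s)" by simp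
      have x2: "Linf_norm M f' - \<eta> \<le> norm (f' x)" using x(3) by simp
      have "(1 - \<epsilon>1 / 2) * (Linf_norm M f' - \<eta>) \<le> (1 - \<epsilon>1 / 2) * norm (f' x)"
        using x2 e1 by (intro mult_left_mono) auto
      moreover have "(1 - \<epsilon>1 / 2) * \<eta> \<le> \<eta>" using e1 \<eta> by (intro mult_left_le_one_le) auto
      ultimately show "(1 - \<epsilon>1 / 2) * (Linf_norm M f' + 1) - 2 * (S * \<delta>) \<le> Linf_norm M (\<lambda>s. f' s + y s) + \<eta>"
      proof -
        have "(1 - \<epsilon>1 / 2) * (Linf_norm M f' + 1) = (1 - \<epsilon>1 / 2) * (Linf_norm M f' - \<eta>) + (1 - \<epsilon>1 / 2) * \<eta> + (1 - \<epsilon>1 / 2) * 1"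
          by (simp add: ring_distribs)
        then show ?thesis using x(1) x1 \<open>(1 - \<epsilon>1 / 2) * (Linf_norm M f' - \<eta>) \<le> (1 - \<epsilon>1 / 2) * norm (f' x)\<close>
          \<open>(1 - \<epsilon>1 / 2) * \<eta> \<le> \<eta>\<close> by linarith
      qed
    qed
    have z: "Linf_norm M (\<lambda>s. f s - f' s) = 0" using c'(1) unfolding f_def f'_def by simp
    have a1: "Linf_norm M (\<lambda>s. f' s + y s) \<le> Linf_norm M (\<lambda>s. f s + y s)"
    proof -
      have "Linf_norm M (\<lambda>s. f' s + y s) \<le> Linf_norm M (\<lambda>s. f s + y s) + Linf_norm M (\<lambda>s. (f' s + y s) - (f s + y s))"
        by (rule N_ge[OF f'yV fyV])
      moreover have "(\<lambda>s. (f' s + y s) - (f s + y s)) = (\<lambda>s. f' s - f s)" by auto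
      moreover have "Linf_norm M (\<lambda>s. f' s - f s) = 0" using z N_sym[OF fV f'V] by simp
      ultimately show ?thesis by simp
    qed
    have a2: "Linf_norm M f \<le> Linf_norm M f'" using N_ge[OF fV f'V] z by simp
    have Nf0: "Linf_norm M f \<ge> 0" using N_nonneg[OF fV] .
    have a3: "(1 - \<epsilon>1 / 2) * (Linf_norm M f + 1) \<le> (1 - \<epsilon>1 / 2) * (Linf_norm M f' + 1)"
      using a2 e1 by (intro mult_left_mono) auto
    have a4: "2 * (S * \<delta>) \<le> \<epsilon>1 / 2 * Linf_norm M f"
    proof -
      have "S * \<delta> \<le> (K * Linf_norm M f) * \<delta>" using c'(2) dp unfolding S_def f_def by (intro mult_right_mono) auto
      also have "\<dots> = (K * \<delta>) * Linf_norm M f" by simp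
      also have "\<dots> \<le> (\<epsilon>1 / 4) * Linf_norm M f" using Kd Nf0 by (rule mult_right_mono)
      finally show ?thesis by simp
    qed
    have a5: "(1 - \<epsilon>1) * (Linf_norm M f + 1) = (1 - \<epsilon>1 / 2) * (Linf_norm M f + 1) - \<epsilon>1 / 2 * Linf_norm M f - \<epsilon>1 / 2"
      by (simp add: ring_distribs)
    have a6: "(1 - \<epsilon>) * (Linf_norm M f + 1) \<le> (1 - \<epsilon>1) * (Linf_norm M f + 1)"
      using e1 Nf0 by (intro mult_right_mono) auto
    have "(1 - \<epsilon>) * (Linf_norm M f + 1) \<le> Linf_norm M (\<lambda>s. f s + y s)"
      using main a1 a3 a4 a5 a6 e1 by linarith
    then show "Linf_norm M (\<lambda>s. (\<Sum>f\<in>B. c f *\<^sub>R f s) + y s) \<ge> (1 - \<epsilon>) * (Linf_norm M (\<lambda>s. \<Sum>f\<in>B. c f *\<^sub>R f s) + 1)"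
      unfolding f_def lc_def by simp
  qed
qed



lemma L1_oct:
  fixes M :: "'a measure"
  assumes c: "complete_measure M" and sf: "sigma_finite_measure M" and ne: "emeasure M (space M) \<noteq> 0"
    and oct: "octahedral TYPE('b::banach)"
  shows "octahedral_fs (L1_space M :: ('a \<Rightarrow> 'b) set) (L1_norm M)"
  unfolding octahedral_fs_def
proof (intro allI impI)
  fix B :: "('a \<Rightarrow> 'b) set" and \<epsilon> :: real
  assume BB: "finite B \<and> B \<subseteq> L1_space M" and \<epsilon>: "\<epsilon> > 0"
  have fin: "finite B" and BV: "B \<subseteq> L1_space M" using BB by auto
  interpret snorm "L1_space M :: ('a \<Rightarrow> 'b) set" "L1_norm M" by (rule L1_snorm[OF c])
  obtain K where K: "K \<ge> 0" "\<And>c. \<exists>c'. L1_norm M (\<lambda>s. lc B c s - lc B c' s) = 0 \<and> (\<Sum>g\<in>B. \<bar>c' g\<bar>) \<le> K * L1_norm M (lc B c)"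
    using fd[OF fin BV] by blast
  define \<epsilon>1 where "\<epsilon>1 = min \<epsilon> 1"
  have e1: "0 < \<epsilon>1" "\<epsilon>1 \<le> 1" "\<epsilon>1 \<le> \<epsilon>" using \<epsilon> unfolding \<epsilon>1_def by auto
  obtain W where W: "W \<in> sets M" "0 < emeasure M W" "emeasure M W < \<infinity>"
    using pos_fin_set[OF sf ne] by blast
  define mW where "mW = measure M W"
  have mWe: "emeasure M W = ennreal mW" unfolding mW_def using W(3) by (simp add: emeasure_eq_ennreal_measure)
  have mW0: "mW \<ge> 0" unfolding mW_def by simp
  define \<delta> where "\<delta> = \<epsilon>1 / (4 * ((K + 1) * (mW + 1)))"
  have dp: "\<delta> > 0" unfolding \<delta>_def using e1 K mW0 by simp
  have Kd: "K * \<delta> * mW \<le> \<epsilon>1 / 4"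
  proof -
    have "K * \<delta> * mW = \<epsilon>1 / 4 * ((K * mW) / ((K + 1) * (mW + 1)))" unfolding \<delta>_def by simp
    moreover have "K * mW \<le> (K + 1) * (mW + 1)" using K mW0 by (simp add: algebra_simps)
    then have "(K * mW) / ((K + 1) * (mW + 1)) \<le> 1" using K mW0 by simp
    ultimately show ?thesis using e1 by (metis mult.right_neutral mult_left_mono less_eq_real_def divide_pos_pos zero_less_numeral)
  qed
  have smB: "\<And>g. g \<in> B \<Longrightarrow> strongly_measurable M g" using BV unfolding L1_space_def by auto
  obtain T and nx :: "'a \<Rightarrow> nat" where T: "\<And>k. simple_function M (T k)" "\<And>k. {x\<in>space M. nx x = k} \<in> sets M"
    "AE x in M. \<forall>g\<in>B. norm (g x - T (nx x) x g) \<le> \<delta>"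
    using partition[OF fin smB dp] by blast
  define P where "P k t = {x\<in>space M. nx x = k} \<inter> (T k -` {t} \<inter> space M) \<inter> W" for k t
  have Pm: "P k t \<in> sets M" for k t
  proof -
    have "T k -` {t} \<inter> space M \<in> sets M"
      using measurable_sets[OF measurable_simple_function[OF T(1)[of k]], of "{t}"] by simp
    then show ?thesis unfolding P_def using T(2) W(1) by auto
  qed
  have "\<exists>k t. 0 < emeasure M (P k t)"
  proof (rule ccontr)
    assume "\<not> ?thesis"
    then have Pn: "P k t \<in> null_sets M" for k t using Pm by (simp add: null_sets_def)
    have "(\<Union>k. \<Union>t\<in>T k ` space M. P k t) \<in> null_sets M"
      by (intro null_sets_UN null_sets_UN' countable_finite simple_functionD(1)[OF T(1)] Pn)
    moreover have "W \<subseteq> (\<Union>k. \<Union>t\<in>T k ` space M. P k t)"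
    proof
      fix x assume "x \<in> W"
      moreover have "x \<in> space M" using sets.sets_into_space[OF W(1)] \<open>x \<in> W\<close> by auto
      ultimately have "x \<in> P (nx x) (T (nx x) x)" unfolding P_def by auto
      then show "x \<in> (\<Union>k. \<Union>t\<in>T k ` space M. P k t)" using \<open>x \<in> space M\<close> by blast
    qed
    ultimately have "W \<in> null_sets M" using W(1) null_sets_subset by blast
    with W(2) show False by (simp add: null_sets_def)
  qed
  then obtain k t where Apos: "0 < emeasure M (P k t)" by blast
  define A where "A = P k t"
  have Am: "A \<in> sets M" unfolding A_def by (rule Pm)
  have AW: "A \<subseteq> W" unfolding A_def P_def by auto
  have Asp: "A \<subseteq> space M" unfolding A_def P_def by auto
  have AeW: "emeasure M A \<le> emeasure M W" using AW W(1) by (rule emeasure_mono)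
  define mA where "mA = measure M A"
  have Afin: "emeasure M A < \<infinity>" using AeW W(3) by (rule le_less_trans)
  have mAe: "emeasure M A = ennreal mA" unfolding mA_def using Afin by (simp add: emeasure_eq_ennreal_measure)
  have mA0: "mA > 0" using Apos mAe unfolding A_def by simp
  have mAW: "mA \<le> mW" using AeW mAe mWe mW0 by simp
  obtain y0 where y0: "norm y0 = 1" "\<forall>x\<in>span (t ` B). norm (x + y0) \<ge> (1 - \<epsilon>1 / 2) * (norm x + 1)"
    using oct_get[OF oct, of "t ` B" "\<epsilon>1 / 2"] fin e1 by auto
  define y where "y x = indicator A x *\<^sub>R ((1 / mA) *\<^sub>R y0)" for x
  have ysf: "simple_function M y" unfolding y_def
    by (rule simple_function_compose1[OF simple_function_indicator[OF Am]])
  have ynorm: "norm (y x) = indicator A x * (1 / mA)" for x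
    unfolding y_def using y0(1) mA0 by (simp add: indicator_def)
  have iA: "integrable M (indicator A :: 'a \<Rightarrow> real)" using Am Afin by simp
  have iy: "integrable M (\<lambda>x. norm (y x))" unfolding ynorm using iA by simp
  have "(\<integral>\<^sup>+ x. ennreal (norm (norm (y x))) \<partial>M) < \<infinity>" using iy unfolding integrable_iff_bounded by blast
  then have yV: "y \<in> L1_space M" unfolding L1_space_def using sm_simple[OF ysf] by simp
  have intA: "(\<integral>x. indicator A x \<partial>M) = mA" unfolding mA_def using Asp by (simp add: Int_absorb2)
  have Ny: "L1_norm M y = 1"
    using L1_int(2)[OF c yV] unfolding ynorm using intA mA0 by simp
  show "\<exists>y\<in>L1_space M. L1_norm M y = 1 \<and> (\<forall>c. L1_norm M (\<lambda>s. (\<Sum>f\<in>B. c f *\<^sub>R f s) + y s)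
      \<ge> (1 - \<epsilon>) * (L1_norm M (\<lambda>s. \<Sum>f\<in>B. c f *\<^sub>R f s) + 1))"
  proof (intro bexI[of _ y] conjI allI)
    show "y \<in> L1_space M" by (rule yV)
    show "L1_norm M y = 1" by (rule Ny)
    fix c
    obtain c' where c': "L1_norm M (\<lambda>s. lc B c s - lc B c' s) = 0" "(\<Sum>g\<in>B. \<bar>c' g\<bar>) \<le> K * L1_norm M (lc B c)"
      using K(2) by blast
    define f where "f = lc B c"
    define f' where "f' = lc B c'"
    define S where "S = (\<Sum>g\<in>B. \<bar>c' g\<bar>)"
    have fV: "f \<in> L1_space M" unfolding f_def by (rule V_lc[OF fin BV])
    have f'V: "f' \<in> L1_space M" unfolding f'_def by (rule V_lc[OF fin BV])
    have fyV: "(\<lambda>s. f s + y s) \<in> L1_space M" by (rule V_add[OF fV yV])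
    have f'yV: "(\<lambda>s. f' s + y s) \<in> L1_space M" by (rule V_add[OF f'V yV])
    define C where "C = (1 - \<epsilon>1 / 2) * (1 / mA) - 2 * (S * \<delta>)"
    have pw: "AE x in M. (1 - \<epsilon>1 / 2) * norm (f' x) + indicator A x * C \<le> norm (f' x + y x)"
      using T(3) AE_space
    proof eventually_elim
      case (elim x)
      show ?case
      proof (cases "x \<in> A")
        case True
        then have tx: "T (nx x) x = t" unfolding A_def P_def by auto
        have "norm (f' x - (\<Sum>g\<in>B. c' g *\<^sub>R t g)) \<le> S * \<delta>"
          using lc_err[OF elim(1)[unfolded tx]] unfolding f'_def S_def .
        moreover have "norm ((\<Sum>g\<in>B. c' g *\<^sub>R t g) + (1 / mA) *\<^sub>R y0) \<ge> (1 - \<epsilon>1 / 2) * (norm (\<Sum>g\<in>B. c' g *\<^sub>R t g) + 1 / mA)"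
          by (rule oct_scaled[OF y0(2) lc_span]) (use mA0 in simp)
        ultimately have "norm (f' x + (1 / mA) *\<^sub>R y0) \<ge> (1 - \<epsilon>1 / 2) * norm (f' x) + (1 - \<epsilon>1 / 2) * (1 / mA) - 2 * (S * \<delta>)"
          by (rule pt_est) (use e1 in auto)
        then show ?thesis using True unfolding y_def C_def by simp
      next
        case False
        have "(1 - \<epsilon>1 / 2) * norm (f' x) \<le> norm (f' x)" using e1 by (intro mult_left_le_one_le) auto
        then show ?thesis using False unfolding y_def by simp
      qed
    qed
    have iR: "integrable M (\<lambda>x. (1 - \<epsilon>1 / 2) * norm (f' x) + indicator A x * C)"
      using L1_int(1)[OF c f'V] iA by simp
    have "(\<integral>x. (1 - \<epsilon>1 / 2) * norm (f' x) + indicator A x * C \<partial>M) \<le> (\<integral>x. norm (f' x + y x) \<partial>M)"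
      by (rule integral_mono_AE[OF iR L1_int(1)[OF c f'yV, simplified] pw])
    moreover have "(\<integral>x. (1 - \<epsilon>1 / 2) * norm (f' x) + indicator A x * C \<partial>M) = (1 - \<epsilon>1 / 2) * L1_norm M f' + mA * C"
      using L1_int[OF c f'V] iA intA by simp
    moreover have "mA * C = (1 - \<epsilon>1 / 2) - 2 * (S * \<delta>) * mA"
      unfolding C_def using mA0 by (simp add: algebra_simps)
    ultimately have main: "(1 - \<epsilon>1 / 2) * (L1_norm M f' + 1) - 2 * (S * \<delta>) * mA \<le> L1_norm M (\<lambda>s. f' s + y s)"
      using L1_int(2)[OF c f'yV] by (simp add: ring_distribs)
    have z: "L1_norm M (\<lambda>s. f s - f' s) = 0" using c'(1) unfolding f_def f'_def by simp
    have a1: "L1_norm M (\<lambda>s. f' s + y s) \<le> L1_norm M (\<lambda>s. f s + y s)"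
    proof -
      have "L1_norm M (\<lambda>s. f' s + y s) \<le> L1_norm M (\<lambda>s. f s + y s) + L1_norm M (\<lambda>s. (f' s + y s) - (f s + y s))"
        by (rule N_ge[OF f'yV fyV])
      moreover have "(\<lambda>s. (f' s + y s) - (f s + y s)) = (\<lambda>s. f' s - f s)" by auto
      moreover have "L1_norm M (\<lambda>s. f' s - f s) = 0" using z N_sym[OF fV f'V] by simp
      ultimately show ?thesis by simp
    qed
    have a2: "L1_norm M f \<le> L1_norm M f'" using N_ge[OF fV f'V] z by simp
    have Nf0: "L1_norm M f \<ge> 0" using N_nonneg[OF fV] .
    have a3: "(1 - \<epsilon>1 / 2) * (L1_norm M f + 1) \<le> (1 - \<epsilon>1 / 2) * (L1_norm M f' + 1)"
      using a2 e1 by (intro mult_left_mono) auto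
    have a4: "2 * (S * \<delta>) * mA \<le> \<epsilon>1 / 2 * L1_norm M f"
    proof -
      have S0: "S \<ge> 0" unfolding S_def by (simp add: sum_nonneg)
      have "S * \<delta> * mA \<le> S * \<delta> * mW" using mAW S0 dp by (intro mult_left_mono) auto
      also have "\<dots> \<le> (K * L1_norm M f) * \<delta> * mW" using c'(2) dp mW0 unfolding S_def f_def
        by (intro mult_right_mono) auto
      also have "\<dots> = (K * \<delta> * mW) * L1_norm M f" by simp
      also have "\<dots> \<le> (\<epsilon>1 / 4) * L1_norm M f" using Kd Nf0 by (rule mult_right_mono)
      finally show ?thesis by simp
    qed
    have a5: "(1 - \<epsilon>1) * (L1_norm M f + 1) = (1 - \<epsilon>1 / 2) * (L1_norm M f + 1) - \<epsilon>1 / 2 * L1_norm M f - \<epsilon>1 / 2"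
      by (simp add: ring_distribs)
    have a6: "(1 - \<epsilon>) * (L1_norm M f + 1) \<le> (1 - \<epsilon>1) * (L1_norm M f + 1)"
      using e1 Nf0 by (intro mult_right_mono) auto
    have "(1 - \<epsilon>) * (L1_norm M f + 1) \<le> L1_norm M (\<lambda>s. f s + y s)"
      using main a1 a3 a4 a5 a6 e1 by linarith
    then show "L1_norm M (\<lambda>s. (\<Sum>f\<in>B. c f *\<^sub>R f s) + y s) \<ge> (1 - \<epsilon>) * (L1_norm M (\<lambda>s. \<Sum>f\<in>B. c f *\<^sub>R f s) + 1)"
      unfolding f_def lc_def by simp
  qed
qed


theorem proposition4p2:
  fixes M :: "'a measure"
  assumes "complete_measure M"
    and "sigma_finite_measure M"
    and "emeasure M (space M) \<noteq> 0"
    and "octahedral TYPE('b::banach)"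
  shows "octahedral_fs (L1_space M :: ('a \<Rightarrow> 'b) set) (L1_norm M) \<and>
         octahedral_fs (Linf_space M :: ('a \<Rightarrow> 'b) set) (Linf_norm M)"
  using L1_oct[OF assms(1) assms(2) assms(3) assms(4)] Linf_oct[OF assms(1) assms(3) assms(4)] by blast

end
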